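(* Let $\alpha=\{a_k\}_{k\ge1}$ be a sequence of positive integers with $a_k\to\infty$, let $j\ge2$, and suppose that for some $\rho>0$, $$L(x;\alpha;j)=\sum_{n=1}^\infty A_L(n)x^n=O\big((1-x)^{-\rho}\big)\qquad\text{as }x\to1^-.$$ Then there is $N_0$ with $\int_0^1 L(x;\alpha;j)F_{N_0}(x;\alpha)|\ln x|^{j-1}\frac{dx}{x}<\infty$, and consequently $\lim_{N\to\infty}E[U_j^N]=I(\alpha;j)<\infty$.
   Context: For $N\ge2$, coupon type $k\in\{1,\dots,N\}$ has probability $a_k/\sum_{i=1}^Na_i$; $U_j^N$ is the number of empty album places of the $j$-th collector when the first collector completes her set (each collector passes duplicates to the next one), with $$E[U_j^N]=\sum_{k=1}^N\int_0^\infty a_k e^{-a_k t}\frac{(a_kt)^{j-1}}{(j-1)!}\prod_{i\ne k,\,1\le i\le N}\big(1-e^{-a_i t}\big)\,dt.$$ $L(x;\alpha;j):=\sum_{k=1}^\infty a_k^j\frac{x^{a_k}}{1-x^{a_k}}$; with $A(m):=\#\{k:a_k=m\}$ this equals $\sum_{m\ge1}m^jA(m)\frac{x^m}{1-x^m}=\sum_{n\ge1}A_L(n)x^n$, $A_L(n):=\sum_{d\mid n}d^jA(d)$. $F_N(x;\alpha):=\prod_{k=1}^N(1-x^{a_k})$, $F(x;\alpha):=\prod_{k=1}^\infty(1-x^{a_k})$, $x_\alpha:=\inf\{x\in[0,1]:\sum_k x^{a_k}=\infty\}$, and $I(\alpha;j):=\frac{1}{(j-1)!}\int_0^{x_\alpha}L(x;\alpha;j)F(x;\alpha)|\ln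 x|^{j-1}\frac{dx}{x}$. *)

theory Defs
  imports "HOL-Analysis.Analysis" "HOL-Library.Landau_Symbols"
begin

text \<open>The sequence alpha is a function a :: nat => nat of which only the values
  a 1, a 2, ... are used (a 0 is irrelevant).\<close>

definition Lser :: "(nat \<Rightarrow> nat) \<Rightarrow> nat \<Rightarrow> real \<Rightarrow> real" where
  "Lser a j x = (\<Sum>k. real (a (Suc k)) ^ j * x ^ a (Suc k) / (1 - x ^ a (Suc k)))"

definition FN :: "(nat \<Rightarrow> nat) \<Rightarrow> nat \<Rightarrow> real \<Rightarrow> real" where
  "FN a N x = (\<Prod>k\<in>{1..N}. 1 - x ^ a k)"

definition Finf :: "(nat \<Rightarrow> nat) \<Rightarrow> real \<Rightarrow> real" where
  "Finf a x = (\<Prod>k. 1 - x ^ a (Suc k))"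

definition x_alpha :: "(nat \<Rightarrow> nat) \<Rightarrow> real" where
  "x_alpha a = Inf {x \<in> {0..1}. \<not> summable (\<lambda>k. x ^ a (Suc k))}"

definition I_alpha :: "(nat \<Rightarrow> nat) \<Rightarrow> nat \<Rightarrow> real" where
  "I_alpha a j = 1 / fact (j - 1) *
     set_lebesgue_integral lborel {0<..<x_alpha a}
       (\<lambda>x. Lser a j x * Finf a x * \<bar>ln x\<bar> ^ (j - 1) / x)"

text \<open>Expected number of empty places of the j-th collector, given by the stated formula.\<close>
definition EU :: "(nat \<Rightarrow> nat) \<Rightarrow> nat \<Rightarrow> nat \<Rightarrow> real" where
  "EU a j N = (\<Sum>k\<in>{1..N}. set_lebesgue_integral lborel {0<..}
      (\<lambda>t. real (a k) * exp (- real (a k) * t) * (real (a k) * t) ^ (j - 1) / fact (j - 1)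
           * (\<Prod>i\<in>{1..N} - {k}. 1 - exp (- real (a i) * t))))"

end

theory Submission
  imports Defs
begin

lemma ratio_mono:
  fixes x y :: real and n :: nat
  assumes "0 < x" "x \<le> y" "y < 1" "n \<ge> 1"
  shows "x ^ n / (1 - x ^ n) \<le> y ^ n / (1 - y ^ n)"
proof -
  have "x ^ n \<le> y ^ n" using assms by (intro power_mono) auto
  moreover have "y ^ n < 1" using assms by (subst power_less_one_iff) auto
  moreover have "0 \<le> x ^ n" using assms by simp
  ultimately show ?thesis by (intro frac_le) auto
qed

lemma ratio_scale:
  fixes x y :: real and n :: nat
  assumes "0 < x" "x \<le> y" "y < 1" "n \<ge> 1"
  shows "x ^ n / (1 - x ^ n) \<le> (x / y) * (y ^ n / (1 - y ^ n))"
proof -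
  have y0: "0 < y" using assms by simp
  have "(x / y) ^ n \<le> (x / y) ^ 1"
    using assms y0 by (intro power_decreasing) auto
  hence "x ^ n \<le> (x / y) * y ^ n"
    using y0 by (simp add: power_divide divide_le_eq)
  moreover have "y ^ n < 1" using assms by (subst power_less_one_iff) auto
  moreover have "x ^ n \<le> y ^ n" using assms by (intro power_mono) auto
  ultimately have "x ^ n / (1 - x ^ n) \<le> (x / y) * y ^ n / (1 - y ^ n)"
    using assms y0 by (intro frac_le) (auto intro: mult_nonneg_nonneg)
  thus ?thesis by simp
qed

lemma one_minus_pow_le:
  fixes x :: real
  assumes "0 \<le> x" "x \<le> 1"
  shows "1 - x ^ n \<le> real n * (1 - x)"
proof -
  have "(\<Sum>i<n. x ^ i) \<le> (\<Sum>i<n. 1)"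
    using assms by (intro sum_mono) (auto intro: power_le_one)
  hence "(1 - x) * (\<Sum>i<n. x ^ i) \<le> (1 - x) * real n"
    using assms by (intro mult_left_mono) auto
  thus ?thesis by (simp add: one_diff_power_eq mult.commute)
qed

lemma ln_pow_bound:
  fixes x :: real and m :: nat
  assumes "0 < x" "x < 1" "m \<ge> 1"
  shows "\<bar>ln x\<bar> ^ m \<le> (2 * real m) ^ m * x powr (-1/2)"
proof -
  define e where "e = 1 / (2 * real m)"
  have e0: "e > 0" using assms by (simp add: e_def)
  have "ln (x powr (-e)) \<le> x powr (-e) - 1"
    using assms by (intro ln_le_minus_one) auto
  hence "-e * ln x \<le> x powr (-e)" by simp
  hence "\<bar>ln x\<bar> \<le> x powr (-e) / e"
    using assms e0 by (simp add: abs_if ln_less_zero field_simps split: if_splits)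
  hence "\<bar>ln x\<bar> ^ m \<le> (x powr (-e) / e) ^ m"
    by (intro power_mono) auto
  also have "\<dots> = (2 * real m) ^ m * (x powr (-e)) ^ m"
    by (simp add: e_def power_divide power_mult_distrib)
  also have "(x powr (-e)) ^ m = x powr (-e * real m)"
    using assms by (simp add: powr_realpow [symmetric] powr_powr)
  also have "-e * real m = -1/2" using assms by (simp add: e_def)
  finally show ?thesis .
qed


definition tm :: "(nat \<Rightarrow> nat) \<Rightarrow> nat \<Rightarrow> nat \<Rightarrow> real \<Rightarrow> real" where
  "tm a j k x = real (a (Suc k)) ^ j * x ^ a (Suc k) / (1 - x ^ a (Suc k))"

lemma Lser_tm: "Lser a j x = (\<Sum>k. tm a j k x)"
  by (simp add: Lser_def tm_def)

lemma tm_nonneg: assumes "0 \<le> x" "x \<le> 1" shows "0 \<le> tm a j k x"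
  using assms unfolding tm_def by (intro divide_nonneg_nonneg) (auto intro: power_le_one)

lemma tm_mono:
  assumes pos: "\<forall>k\<ge>1. a k > 0" and "0 < x" "x \<le> y" "y < 1"
  shows "tm a j k x \<le> tm a j k y"
proof -
  have "a (Suc k) \<ge> 1" using pos[rule_format, of "Suc k"] by simp
  thus ?thesis unfolding tm_def using assms ratio_mono[of x y "a (Suc k)"]
    by (simp add: mult_left_mono times_divide_eq_right [symmetric] del: times_divide_eq_right)
qed

lemma tm_scale:
  assumes pos: "\<forall>k\<ge>1. a k > 0" and "0 < x" "x \<le> y" "y < 1"
  shows "tm a j k x \<le> (x / y) * tm a j k y"
proof -
  have "a (Suc k) \<ge> 1" using pos[rule_format, of "Suc k"] by simp
  hence "real (a (Suc k)) ^ j * (x ^ a (Suc k) / (1 - x ^ a (Suc k)))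
     \<le> real (a (Suc k)) ^ j * ((x / y) * (y ^ a (Suc k) / (1 - y ^ a (Suc k))))"
    using assms ratio_scale[of x y "a (Suc k)"] by (intro mult_left_mono) auto
  thus ?thesis unfolding tm_def by (simp add: field_simps)
qed

lemma summable_all:
  assumes pos: "\<forall>k\<ge>1. a k > 0"
    and fin: "\<forall>\<^sub>F x in at_left 1.
               summable (\<lambda>k. real (a (Suc k)) ^ j * x ^ a (Suc k) / (1 - x ^ a (Suc k)))"
    and x: "0 < x" "x < 1"
  shows "summable (\<lambda>k. tm a j k x)"
proof -
  from fin obtain b where b: "b < 1" "\<forall>y>b. y < 1 \<longrightarrow> summable (\<lambda>k. tm a j k y)"
    unfolding eventually_at_left_field tm_def by blast
  define c where "c = (max b 0 + 1) / 2"
  have c: "b < c" "0 < c" "c < 1" using b by (auto simp: c_def)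
  show ?thesis
  proof (cases "x > b")
    case True thus ?thesis using b x by auto
  next
    case False
    hence "x \<le> c" using c by auto
    show ?thesis
    proof (rule summable_comparison_test')
      show "summable (\<lambda>k. tm a j k c)" using b c by auto
      fix k :: nat
      show "norm (tm a j k x) \<le> tm a j k c"
        using tm_nonneg[of x a j k] tm_mono[OF pos x(1) \<open>x \<le> c\<close> c(3)] x by auto
    qed
  qed
qed

lemma Lser_nonneg:
  assumes "\<And>k. summable (\<lambda>k. tm a j k x)" "0 \<le> x" "x \<le> 1"
  shows "0 \<le> Lser a j x"
  unfolding Lser_tm using assms by (intro suminf_nonneg tm_nonneg) auto

lemma Lser_scale:
  assumes pos: "\<forall>k\<ge>1. a k > 0" and sx: "summable (\<lambda>k. tm a j k x)"
    and sy: "summable (\<lambda>k. tm a j k y)" and "0 < x" "x \<le> y" "y < 1"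
  shows "Lser a j x \<le> (x / y) * Lser a j y"
proof -
  have "Lser a j x \<le> (\<Sum>k. (x / y) * tm a j k y)"
    unfolding Lser_tm using assms by (intro suminf_le tm_scale summable_mult) auto
  also have "\<dots> = (x / y) * Lser a j y" unfolding Lser_tm using sy by (rule suminf_mult)
  finally show ?thesis .
qed

lemma x_alpha_eq:
  assumes pos: "\<forall>k\<ge>1. a k > 0" and summ: "\<And>x. 0 < x \<Longrightarrow> x < 1 \<Longrightarrow> summable (\<lambda>k. tm a j k x)"
  shows "x_alpha a = 1"
proof -
  have "{x \<in> {0..1}. \<not> summable (\<lambda>k. x ^ a (Suc k))} = {1::real}"
  proof safe
    have "\<not> (\<lambda>k. (1::real)) \<longlonglongrightarrow> 0" by (simp add: LIMSEQ_const_iff)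
    thus "summable (\<lambda>k. (1::real) ^ a (Suc k)) \<Longrightarrow> False"
      using summable_LIMSEQ_zero by fastforce
  next
    fix x :: real assume x: "x \<in> {0..1}" "\<not> summable (\<lambda>k. x ^ a (Suc k))"
    show "x = 1"
    proof (rule ccontr)
      assume "x \<noteq> 1"
      hence x1: "x < 1" using x by auto
      show False
      proof (cases "x = 0")
        case True
        have "(\<lambda>k. x ^ a (Suc k)) = (\<lambda>k. 0)" using pos True by auto
        thus False using x by simp
      next
        case False
        hence x0: "0 < x" using x by auto
        have "summable (\<lambda>k. x ^ a (Suc k))"
        proof (rule summable_comparison_test')
          show "summable (\<lambda>k. tm a j k x)" using summ x0 x1 .
          fix k :: nat
          have a1: "a (Suc k) \<ge> 1" using pos[rule_format, of "Suc k"] by simp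
          have p1: "x ^ a (Suc k) < 1" using x0 x1 a1 by (subst power_less_one_iff) auto
          have p0: "0 < x ^ a (Suc k)" using x0 by simp
          have "x ^ a (Suc k) \<le> x ^ a (Suc k) / (1 - x ^ a (Suc k))"
            using p0 p1 by (simp add: le_divide_eq)
          also have "\<dots> \<le> real (a (Suc k)) ^ j * (x ^ a (Suc k) / (1 - x ^ a (Suc k)))"
          proof -
            have "0 < x ^ a (Suc k) / (1 - x ^ a (Suc k))" using p0 p1 by simp
            thus ?thesis using a1 by (subst mult_le_cancel_right1) (auto intro!: one_le_power)
          qed
          finally show "norm (x ^ a (Suc k)) \<le> tm a j k x" using p0 by (simp add: tm_def)
        qed
        thus False using x by simp
      qed
    qed
  qed (auto)
  thus ?thesis unfolding x_alpha_def by simp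
qed


lemma FN_nonneg: assumes "0 \<le> x" "x \<le> (1::real)" shows "0 \<le> FN a N x"
  unfolding FN_def using assms by (intro prod_nonneg) (auto intro: power_le_one)

lemma FN_le1: assumes "0 \<le> x" "x \<le> (1::real)" shows "FN a N x \<le> 1"
  unfolding FN_def using assms by (intro prod_le_1) (auto intro: power_le_one)

lemma FN_Suc: "FN a (Suc N) x = FN a N x * (1 - x ^ a (Suc N))"
  unfolding FN_def by (simp add: prod.cl_ivl_Suc)

lemma FN_antimono: assumes "0 \<le> x" "x \<le> (1::real)" "N0 \<le> N" shows "FN a N x \<le> FN a N0 x"
proof -
  have "decseq (\<lambda>N. FN a N x)"
  proof (rule decseq_SucI)
    fix N
    show "FN a (Suc N) x \<le> FN a N x"
      unfolding FN_Suc using assms FN_nonneg[of x a N]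
      by (intro mult_left_le) (auto simp: zero_le_power)
  qed
  thus ?thesis using assms(3) by (rule decseqD)
qed

lemma FN_bound: assumes "0 \<le> x" "x \<le> (1::real)"
  shows "FN a N x \<le> (\<Prod>k\<in>{1..N}. real (a k)) * (1 - x) ^ N"
proof -
  have "FN a N x \<le> (\<Prod>k\<in>{1..N}. real (a k) * (1 - x))"
    unfolding FN_def using assms
    by (intro prod_mono) (auto intro: power_le_one one_minus_pow_le)
  also have "\<dots> = (\<Prod>k\<in>{1..N}. real (a k)) * (1 - x) ^ N"
    by (simp add: prod.distrib)
  finally show ?thesis .
qed

lemma powr_neg_half_ge1:
  fixes x :: real assumes x0: "0 < x" and x1: "x < 1" shows "1 \<le> x powr (-1/2)"
proof -
  have h1: "x powr (-1/2) * x powr (1/2) = 1" using x0 by (simp add: powr_add[symmetric])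
  have h2: "x powr (1/2) \<le> 1" using x0 x1 powr_mono2[of "1/2" x 1] by simp
  have h3: "0 < x powr (-1/2)" using x0 by simp
  show ?thesis using mult_left_le[OF h2 less_imp_le[OF h3]] h1 by simp
qed

lemma main_bound:
  fixes a :: "nat \<Rightarrow> nat" and j :: nat and \<rho> :: real
  assumes pos: "\<forall>k\<ge>1. a k > 0"
    and j: "j \<ge> 2"
    and summ: "\<And>x. 0 < x \<Longrightarrow> x < 1 \<Longrightarrow> summable (\<lambda>k. tm a j k x)"
    and bigO: "Lser a j \<in> O[at_left 1](\<lambda>x. (1 - x) powr (- \<rho>))"
  shows "\<exists>M. \<forall>x\<in>{0<..<1}. 
     Lser a j x * FN a (nat \<lceil>\<rho>\<rceil>) x * \<bar>ln x\<bar> ^ (j - 1) / x \<le> M * x powr (-1/2)"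
proof -
  define N0 where "N0 = nat \<lceil>\<rho>\<rceil>"
  define m where "m = j - 1"
  have m1: "m \<ge> 1" using j by (simp add: m_def)
  have N0r: "\<rho> \<le> real N0" unfolding N0_def by linarith
  from bigO obtain c where c: "c > 0"
    "eventually (\<lambda>x. norm (Lser a j x) \<le> c * norm ((1 - x) powr (- \<rho>))) (at_left (1::real))"
    by (auto elim: landau_o.bigE)
  from c(2) obtain b where b: "b < 1"
    "\<forall>y>b. y < 1 \<longrightarrow> norm (Lser a j y) \<le> c * norm ((1 - y) powr (- \<rho>))"
    unfolding eventually_at_left_field by blast
  define x2 where "x2 = (max b (1/2) + 1) / 2"
  have x2: "b < x2" "1/2 < x2" "x2 < 1" using b by (auto simp: x2_def)
  define P0 where "P0 = (\<Prod>k\<in>{1..N0}. real (a k))"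
  have P0: "P0 \<ge> 0" unfolding P0_def by (intro prod_nonneg) auto
  define M where "M = c * P0 * 2 + Lser a j x2 / x2 * (2 * real m) ^ m"
  have Lx2: "0 \<le> Lser a j x2" using summ x2 by (intro Lser_nonneg) auto
  have M1: "0 \<le> c * P0 * 2" using c P0 by auto
  have M2: "0 \<le> Lser a j x2 / x2 * (2 * real m) ^ m" using Lx2 x2 by auto
  show ?thesis unfolding N0_def[symmetric] m_def[symmetric]
  proof (intro exI[of _ M] ballI)
    fix x :: real assume x: "x \<in> {0<..<1}"
    hence x0: "0 < x" and x1: "x < 1" by auto
    have Lx: "0 \<le> Lser a j x" using summ x0 x1 by (intro Lser_nonneg) auto
    have F0: "0 \<le> FN a N0 x" using x0 x1 by (intro FN_nonneg) auto
    have F1: "FN a N0 x \<le> 1" using x0 x1 by (intro FN_le1) auto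
    have pw1: "1 \<le> x powr (-1/2)" using x0 x1 by (rule powr_neg_half_ge1)
    show "Lser a j x * FN a N0 x * \<bar>ln x\<bar> ^ m / x \<le> M * x powr (-1/2)"
    proof (cases "x \<ge> x2")
      case True
      have Lb: "Lser a j x \<le> c * (1 - x) powr (- \<rho>)"
        using b(2)[rule_format, of x] True x2 x1 Lx by auto
      have Fb: "FN a N0 x \<le> P0 * (1 - x) ^ N0"
        unfolding P0_def using x0 x1 by (intro FN_bound) auto
      have "Lser a j x * FN a N0 x \<le> (c * (1 - x) powr (- \<rho>)) * (P0 * (1 - x) ^ N0)"
        using Lb Fb Lx F0 by (intro mult_mono) auto
      also have "\<dots> = c * P0 * ((1 - x) powr (real N0 - \<rho>))"
        using x1 by (simp add: powr_diff powr_realpow powr_minus field_simps)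
      also have "\<dots> \<le> c * P0 * 1"
      proof -
        have "(1 - x) powr (real N0 - \<rho>) \<le> 1 powr (real N0 - \<rho>)"
          using x0 x1 N0r by (intro powr_mono2) auto
        thus ?thesis using c P0 by (intro mult_left_mono) auto
      qed
      finally have LF: "Lser a j x * FN a N0 x \<le> c * P0" by simp
      have "-ln x = ln (1 / x)" using x0 by (simp add: ln_div)
      also have "\<dots> \<le> 1 / x - 1" using x0 by (intro ln_le_minus_one) auto
      also have "\<dots> \<le> 1" using True x2 x0 by (simp add: field_simps)
      finally have "\<bar>ln x\<bar> \<le> 1" using x0 x1 by (simp add: abs_if)
      hence lnb: "\<bar>ln x\<bar> ^ m \<le> 1" by (intro power_le_one) auto
      have xinv: "1 / x \<le> 2" using True x2 x0 by (simp add: field_simps)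
      have "Lser a j x * FN a N0 x * \<bar>ln x\<bar> ^ m / x = (Lser a j x * FN a N0 x) * \<bar>ln x\<bar> ^ m * (1 / x)"
        by simp
      also have "\<dots> \<le> (c * P0) * 1 * 2"
      proof -
        have A: "(Lser a j x * FN a N0 x) * \<bar>ln x\<bar> ^ m \<le> (c * P0) * 1"
          by (rule mult_mono[OF LF lnb]) (use c P0 in auto)
        show ?thesis by (rule mult_mono[OF A xinv]) (use c P0 x0 in auto)
      qed
      also have "\<dots> \<le> M" using M2 by (simp add: M_def)
      also have "\<dots> \<le> M * x powr (-1/2)" using mult_left_mono[OF pw1, of M] M1 M2 by (simp add: M_def)
      finally show ?thesis .
    next
      case False
      have Lb: "Lser a j x \<le> (x / x2) * Lser a j x2"
        using False x0 x2 summ by (intro Lser_scale pos) auto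
      have lnb: "\<bar>ln x\<bar> ^ m \<le> (2 * real m) ^ m * x powr (-1/2)"
        using x0 x1 m1 by (intro ln_pow_bound) auto
      have "Lser a j x * FN a N0 x * \<bar>ln x\<bar> ^ m / x \<le> ((x / x2) * Lser a j x2) * 1 * ((2 * real m) ^ m * x powr (-1/2)) / x"
        using Lb F1 lnb Lx F0 x0 by (intro divide_right_mono mult_mono) auto
      also have "\<dots> = Lser a j x2 / x2 * (2 * real m) ^ m * x powr (-1/2)"
        using x0 by simp
      also have "\<dots> \<le> M * x powr (-1/2)"
        using M1 by (intro mult_right_mono) (auto simp: M_def)
      finally show ?thesis .
    qed
  qed
qed


lemma set_integrable_lborel_iff:
  fixes f :: "real \<Rightarrow> real"
  assumes "set_borel_measurable lborel S f"
  shows "set_integrable lborel S f \<longleftrightarrow> f absolutely_integrable_on S"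
  using assms unfolding set_integrable_def set_borel_measurable_def
  by (simp add: integrable_completion)

lemma powr_integrable: "set_integrable lborel {0<..<1::real} (\<lambda>x. x powr (-1/2))"
proof -
  have "(\<lambda>x::real. x powr (-1/2)) integrable_on {0<..1}"
    by (rule integrable_on_powr_from_0') auto
  hence "(\<lambda>x::real. x powr (-1/2)) absolutely_integrable_on {0<..1}"
    by (rule nonnegative_absolutely_integrable_1) auto
  hence "set_integrable lborel {0<..1::real} (\<lambda>x. x powr (-1/2))"
    by (subst set_integrable_lborel_iff) (auto simp: set_borel_measurable_def)
  thus ?thesis by (rule set_integrable_subset) auto
qed

lemma cov:
  fixes \<phi> ft :: "real \<Rightarrow> real"
  assumes int: "set_integrable lborel {0<..<1} \<phi>"
    and mphi: "\<phi> \<in> borel_measurable borel" and mft: "ft \<in> borel_measurable borel"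
    and eq: "\<And>t. t > 0 \<Longrightarrow> ft t = exp (-t) * \<phi> (exp (-t))"
  shows "set_integrable lborel {0<..} ft"
    and "set_lebesgue_integral lborel {0<..} ft = set_lebesgue_integral lborel {0<..<1} \<phi>"
proof -
  note [measurable] = mphi mft
  have sb1: "set_borel_measurable lborel {0<..<1} \<phi>"
    unfolding set_borel_measurable_def by measurable
  have sb2: "set_borel_measurable lborel {0<..} ft"
    unfolding set_borel_measurable_def by measurable
  define b where "b = integral {0<..<1} \<phi>"
  have ai: "\<phi> absolutely_integrable_on {0<..<1}"
    using int by (subst (asm) set_integrable_lborel_iff[OF sb1])
  have img: "(\<lambda>t::real. exp (-t)) ` {0<..} = {0<..<1}"
  proof safe
    fix x :: real assume "x \<in> {0<..<1}"
    hence "x = exp (- (- ln x))" "- ln x \<in> {0<..}" by (auto simp: ln_less_zero)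
    thus "x \<in> (\<lambda>t. exp (-t)) ` {0<..}" by blast
  qed auto
  have cv: "(\<lambda>t. \<bar>- exp (-t)\<bar> * \<phi> (exp (-t))) absolutely_integrable_on {0<..} \<and>
           integral {0<..} (\<lambda>t. \<bar>- exp (-t)\<bar> * \<phi> (exp (-t))) = b
     \<longleftrightarrow> \<phi> absolutely_integrable_on ((\<lambda>t::real. exp (-t)) ` {0<..}) \<and> integral ((\<lambda>t::real. exp (-t)) ` {0<..}) \<phi> = b"
    by (rule has_absolute_integral_change_of_variables_1')
       (auto intro!: derivative_eq_intros inj_onI)
  hence cv2: "(\<lambda>t. \<bar>- exp (-t)\<bar> * \<phi> (exp (-t))) absolutely_integrable_on {0<..}"
       "integral {0<..} (\<lambda>t. \<bar>- exp (-t)\<bar> * \<phi> (exp (-t))) = b"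
    using ai unfolding img b_def by auto
  have ieq: "(\<lambda>t. indicator {0<..} t *\<^sub>R (\<bar>- exp (-t)\<bar> * \<phi> (exp (-t)))) = (\<lambda>t. indicator {0<..} t *\<^sub>R ft t)"
    using eq by (auto simp: indicator_def)
  have ai2: "ft absolutely_integrable_on {0<..}"
    using cv2(1) unfolding set_integrable_def ieq .
  show si: "set_integrable lborel {0<..} ft"
    using ai2 by (subst set_integrable_lborel_iff[OF sb2])
  have "set_lebesgue_integral lborel {0<..} ft = integral {0<..} ft"
    by (rule set_borel_integral_eq_integral(2)[OF si])
  also have "\<dots> = integral {0<..} (\<lambda>t. \<bar>- exp (-t)\<bar> * \<phi> (exp (-t)))"
    using eq by (intro integral_cong) auto
  also have "\<dots> = b" by (rule cv2(2))
  also have "b = set_lebesgue_integral lborel {0<..<1} \<phi>"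
    unfolding b_def by (rule set_borel_integral_eq_integral(2)[OF int, symmetric])
  finally show "set_lebesgue_integral lborel {0<..} ft = set_lebesgue_integral lborel {0<..<1} \<phi>" .
qed


definition psi :: "(nat \<Rightarrow> nat) \<Rightarrow> nat \<Rightarrow> nat \<Rightarrow> nat \<Rightarrow> real \<Rightarrow> real" where
  "psi a j N k x = real (a k) ^ j / fact (j - 1) * (x ^ a k / x) *
      (\<Prod>i\<in>{1..N}-{k}. 1 - x ^ a i) * \<bar>ln x\<bar> ^ (j - 1)"

lemma psi_measurable [measurable]: "psi a j N k \<in> borel_measurable borel"
  unfolding psi_def by measurable

lemma psi_integrable:
  assumes pos: "\<forall>k\<ge>1. a k > 0" and k: "k \<in> {1..N}" and j: "j \<ge> 2"
  shows "set_integrable lborel {0<..<1} (psi a j N k)"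
proof (rule set_integrable_bound)
  define m where "m = j - 1"
  have m1: "m \<ge> 1" using j by (simp add: m_def)
  define C0 where "C0 = real (a k) ^ j / fact m"
  have C0: "0 \<le> C0" by (simp add: C0_def)
  show "set_integrable lborel {0<..<1} (\<lambda>x. C0 * (2 * real m) ^ m * x powr (-1/2))"
    using powr_integrable by (intro set_integrable_mult_right) auto
  show "set_borel_measurable lborel {0<..<1} (psi a j N k)"
    unfolding set_borel_measurable_def by measurable
  have ak: "a k \<ge> 1" using pos k by (simp add: Suc_le_eq)
  show "AE x in lborel. x \<in> {0<..<1} \<longrightarrow> norm (psi a j N k x) \<le> norm (C0 * (2 * real m) ^ m * x powr (-1/2))"
  proof (rule AE_I2, rule impI)
    fix x :: real assume x: "x \<in> {0<..<1}"
    hence x0: "0 < x" and x1: "x < 1" by auto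
    define q where "q = x ^ a k / x"
    define P where "P = (\<Prod>i\<in>{1..N}-{k}. 1 - x ^ a i)"
    have q0: "0 \<le> q" using x0 by (simp add: q_def)
    have "x ^ a k \<le> x ^ 1" using x0 x1 ak by (intro power_decreasing) auto
    hence q1: "q \<le> 1" using x0 by (simp add: q_def)
    have P0: "0 \<le> P" unfolding P_def using x0 x1 by (intro prod_nonneg) (auto intro: power_le_one)
    have P1: "P \<le> 1" unfolding P_def using x0 x1 by (intro prod_le_1) (auto intro: power_le_one)
    have qP0: "0 \<le> q * P" using q0 P0 by simp
    have qP1: "q * P \<le> 1" using q0 q1 P0 P1 by (intro mult_le_one) auto
    have lnb: "\<bar>ln x\<bar> ^ m \<le> (2 * real m) ^ m * x powr (-1/2)"
      using x0 x1 m1 by (intro ln_pow_bound) auto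
    have eqpsi: "psi a j N k x = C0 * ((q * P) * \<bar>ln x\<bar> ^ m)"
      by (simp add: psi_def C0_def q_def P_def m_def)
    have ps0: "0 \<le> psi a j N k x" unfolding eqpsi using C0 qP0 by simp
    have "psi a j N k x \<le> C0 * \<bar>ln x\<bar> ^ m"
      unfolding eqpsi using C0 qP0 qP1 by (intro mult_left_mono mult_left_le_one_le) auto
    also have "\<dots> \<le> C0 * ((2 * real m) ^ m * x powr (-1/2))"
      using C0 lnb by (intro mult_left_mono) auto
    finally show "norm (psi a j N k x) \<le> norm (C0 * (2 * real m) ^ m * x powr (-1/2))"
      using ps0 C0 by (simp add: mult.assoc)
  qed
qed

lemma EU_term:
  assumes pos: "\<forall>k\<ge>1. a k > 0" and k: "k \<in> {1..N}" and j: "j \<ge> 2"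
  shows "set_lebesgue_integral lborel {0<..}
      (\<lambda>t. real (a k) * exp (- real (a k) * t) * (real (a k) * t) ^ (j - 1) / fact (j - 1)
           * (\<Prod>i\<in>{1..N} - {k}. 1 - exp (- real (a i) * t)))
    = set_lebesgue_integral lborel {0<..<1} (psi a j N k)"
proof (rule cov(2)[OF psi_integrable[OF pos k j]])
  show "psi a j N k \<in> borel_measurable borel" by measurable
  show "(\<lambda>t. real (a k) * exp (- real (a k) * t) * (real (a k) * t) ^ (j - 1) / fact (j - 1)
           * (\<Prod>i\<in>{1..N} - {k}. 1 - exp (- real (a i) * t))) \<in> borel_measurable borel"
    by measurable
  fix t :: real assume t: "t > 0"
  have pw: "\<And>n. exp (-t) ^ n = exp (- (real n * t))"
    by (simp add: exp_of_nat_mult[symmetric])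
  obtain m where jm: "j = Suc m" using j by (cases j) auto
  show "real (a k) * exp (- real (a k) * t) * (real (a k) * t) ^ (j - 1) / fact (j - 1)
           * (\<Prod>i\<in>{1..N} - {k}. 1 - exp (- real (a i) * t)) = exp (- t) * psi a j N k (exp (- t))"
  proof -
    have P: "(\<Prod>i\<in>{1..N}-{k}. 1 - exp (-t) ^ a i) = (\<Prod>i\<in>{1..N}-{k}. 1 - exp (- real (a i) * t))"
      by (simp add: pw)
    have L: "\<bar>ln (exp (-t))\<bar> = t" using t by simp
    have E: "exp (-t) ^ a k = exp (- real (a k) * t)" by (simp add: pw)
    show ?thesis unfolding psi_def P L E jm
      by (simp add: power_mult_distrib field_simps)
  qed
qed


definition LN :: "(nat \<Rightarrow> nat) \<Rightarrow> nat \<Rightarrow> nat \<Rightarrow> real \<Rightarrow> real" where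
  "LN a j N x = (\<Sum>k\<in>{1..N}. real (a k) ^ j * x ^ a k / (1 - x ^ a k))"

definition sN :: "(nat \<Rightarrow> nat) \<Rightarrow> nat \<Rightarrow> nat \<Rightarrow> real \<Rightarrow> real" where
  "sN a j N x = indicator {0<..<1} x * (LN a j N x * FN a N x * \<bar>ln x\<bar> ^ (j - 1) / x)"

lemma sN_measurable [measurable]: "sN a j N \<in> borel_measurable borel"
  unfolding sN_def LN_def FN_def by measurable

lemma LN_tm: "LN a j N x = (\<Sum>k<N. tm a j k x)"
  unfolding LN_def tm_def by (simp add: sum.atLeast1_atMost_eq)

lemma FN_lessThan: "FN a N x = (\<Prod>k<N. 1 - x ^ a (Suc k))"
  unfolding FN_def by (simp add: prod.atLeast1_atMost_eq)

lemma psi_sum: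
  assumes pos: "\<forall>k\<ge>1. a k > 0"
  shows "(\<Sum>k\<in>{1..N}. indicator {0<..<1} x * psi a j N k x) = 1 / fact (j - 1) * sN a j N x"
proof (cases "x \<in> {0<..<1::real}")
  case False thus ?thesis by (simp add: sN_def)
next
  case True
  hence x0: "0 < x" and x1: "x < 1" by auto
  have "psi a j N k x = (real (a k) ^ j * x ^ a k / (1 - x ^ a k)) *
          (FN a N x * \<bar>ln x\<bar> ^ (j - 1) / x / fact (j - 1))" if k: "k \<in> {1..N}" for k
  proof -
    have ak: "a k \<ge> 1" using pos k by (simp add: Suc_le_eq)
    have p1: "x ^ a k < 1" using x0 x1 ak by (subst power_less_one_iff) auto
    have "FN a N x = (1 - x ^ a k) * (\<Prod>i\<in>{1..N}-{k}. 1 - x ^ a i)"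
      unfolding FN_def using k by (subst prod.remove) auto
    hence Pk: "(\<Prod>i\<in>{1..N}-{k}. 1 - x ^ a i) = FN a N x / (1 - x ^ a k)"
      using p1 by (simp add: field_simps)
    show ?thesis using p1 x0 unfolding psi_def Pk by (simp add: field_simps)
  qed
  hence "(\<Sum>k\<in>{1..N}. indicator {0<..<1} x * psi a j N k x) =
      (\<Sum>k\<in>{1..N}. (real (a k) ^ j * x ^ a k / (1 - x ^ a k)) *
          (FN a N x * \<bar>ln x\<bar> ^ (j - 1) / x / fact (j - 1)))"
    using True by (intro sum.cong) auto
  also have "\<dots> = LN a j N x * (FN a N x * \<bar>ln x\<bar> ^ (j - 1) / x / fact (j - 1))"
    by (simp only: LN_def sum_distrib_right)
  also have "\<dots> = 1 / fact (j - 1) * sN a j N x"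
    using True unfolding sN_def by (simp add: mult.commute mult.left_commute mult.assoc)
  finally show ?thesis .
qed

lemma EU_repr:
  assumes pos: "\<forall>k\<ge>1. a k > 0" and j: "j \<ge> 2"
  shows "EU a j N = 1 / fact (j - 1) * (LINT x|lborel. sN a j N x)"
proof -
  have "EU a j N = (\<Sum>k\<in>{1..N}. set_lebesgue_integral lborel {0<..<1} (psi a j N k))"
    unfolding EU_def by (intro sum.cong refl EU_term[OF pos _ j])
  also have "\<dots> = (\<Sum>k\<in>{1..N}. LINT x|lborel. indicator {0<..<1} x * psi a j N k x)"
    by (simp add: set_lebesgue_integral_def)
  also have "\<dots> = (LINT x|lborel. (\<Sum>k\<in>{1..N}. indicator {0<..<1} x * psi a j N k x))"
    by (rule Bochner_Integration.integral_sum[where I="{1..N}" and M=lborel and f="\<lambda>k x. indicator {0<..<1} x * psi a j N k x", symmetric])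
       (use psi_integrable[OF pos _ j] in \<open>auto simp: set_integrable_def\<close>)
  also have "\<dots> = (LINT x|lborel. 1 / fact (j - 1) * sN a j N x)"
    by (intro Bochner_Integration.integral_cong refl psi_sum[OF pos])
  also have "\<dots> = 1 / fact (j - 1) * (LINT x|lborel. sN a j N x)" by simp
  finally show ?thesis .
qed

lemma summable_pow:
  assumes pos: "\<forall>k\<ge>1. a k > 0" and summ: "summable (\<lambda>k. tm a j k x)" and x0: "0 < x" and x1: "x < 1"
  shows "summable (\<lambda>k. x ^ a (Suc k))"
proof (rule summable_comparison_test')
  show "summable (\<lambda>k. tm a j k x)" using summ .
  fix k :: nat
  have a1: "a (Suc k) \<ge> 1" using pos[rule_format, of "Suc k"] by simp
  have p1: "x ^ a (Suc k) < 1" using x0 x1 a1 by (subst power_less_one_iff) auto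
  have p0: "0 < x ^ a (Suc k)" using x0 by simp
  have "x ^ a (Suc k) \<le> x ^ a (Suc k) / (1 - x ^ a (Suc k))"
    using p0 p1 by (simp add: le_divide_eq)
  also have "\<dots> \<le> real (a (Suc k)) ^ j * (x ^ a (Suc k) / (1 - x ^ a (Suc k)))"
  proof -
    have "0 < x ^ a (Suc k) / (1 - x ^ a (Suc k))" using p0 p1 by simp
    thus ?thesis using a1 by (subst mult_le_cancel_right1) (auto intro!: one_le_power)
  qed
  finally show "norm (x ^ a (Suc k)) \<le> tm a j k x" using p0 by (simp add: tm_def)
qed

lemma FN_lim:
  assumes pos: "\<forall>k\<ge>1. a k > 0" and summ: "summable (\<lambda>k. tm a j k x)" and x0: "0 < x" and x1: "x < 1"
  shows "(\<lambda>N. FN a N x) \<longlonglongrightarrow> Finf a x"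
proof -
  have "summable (\<lambda>k. norm ((1 - x ^ a (Suc k)) - 1))"
    using summable_pow[OF pos summ x0 x1] x0 by (simp add: power_abs abs_of_pos)
  hence "convergent_prod (\<lambda>k. 1 - x ^ a (Suc k))"
    by (intro abs_convergent_prod_imp_convergent_prod summable_imp_abs_convergent_prod)
  hence "(\<lambda>n. \<Prod>i\<le>n. 1 - x ^ a (Suc i)) \<longlonglongrightarrow> Finf a x"
    unfolding Finf_def by (rule convergent_prod_LIMSEQ)
  hence "(\<lambda>n. FN a (Suc n) x) \<longlonglongrightarrow> Finf a x"
    unfolding FN_lessThan by (simp add: lessThan_Suc_atMost)
  thus ?thesis by (rule LIMSEQ_imp_Suc)
qed


theorem corollary1:
  fixes a :: "nat \<Rightarrow> nat" and j :: nat and \<rho> :: real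
  assumes pos: "\<forall>k\<ge>1. a k > 0"
    and tends: "filterlim a at_top sequentially"
    and j: "j \<ge> 2"
    and rho: "\<rho> > 0"
    and fin: "\<forall>\<^sub>F x in at_left 1.
               summable (\<lambda>k. real (a (Suc k)) ^ j * x ^ a (Suc k) / (1 - x ^ a (Suc k)))"
    and bigO: "Lser a j \<in> O[at_left 1](\<lambda>x. (1 - x) powr (- \<rho>))"
  shows "(\<exists>N0. set_integrable lborel {0<..<1::real}
            (\<lambda>x. Lser a j x * FN a N0 x * \<bar>ln x\<bar> ^ (j - 1) / x))
       \<and> set_integrable lborel {0<..<x_alpha a}
            (\<lambda>x. Lser a j x * Finf a x * \<bar>ln x\<bar> ^ (j - 1) / x)
       \<and> (\<lambda>N. EU a j N) \<longlonglongrightarrow> I_alpha a j"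
proof -
  have summ: "\<And>x. 0 < x \<Longrightarrow> x < 1 \<Longrightarrow> summable (\<lambda>k. tm a j k x)"
    by (rule summable_all[OF pos fin]) auto
  have xa: "x_alpha a = 1" by (rule x_alpha_eq[OF pos summ])
  define N0 where "N0 = nat \<lceil>\<rho>\<rceil>"
  obtain M where M: "\<forall>x\<in>{0<..<1}. Lser a j x * FN a N0 x * \<bar>ln x\<bar> ^ (j - 1) / x \<le> M * x powr (-1/2)"
    using main_bound[OF pos j summ bigO] unfolding N0_def by blast
  define S :: "real set" where "S = {0<..<1}"
  define h where "h = (\<lambda>x. Lser a j x * FN a N0 x * \<bar>ln x\<bar> ^ (j - 1) / x)"
  have h0: "0 \<le> h x" if "x \<in> S" for x
  proof -
    have x0: "0 < x" and x1: "x < 1" using that by (auto simp: S_def)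
    have "0 \<le> Lser a j x" using summ x0 x1 by (intro Lser_nonneg) auto
    moreover have "0 \<le> FN a N0 x" using x0 x1 by (intro FN_nonneg) auto
    ultimately show ?thesis using x0 by (simp add: h_def)
  qed
  have hm: "h \<in> borel_measurable borel" unfolding h_def Lser_def FN_def by measurable
  have int1: "set_integrable lborel S h"
  proof (rule set_integrable_bound)
    show "set_integrable lborel S (\<lambda>x. M * x powr (-1/2))"
      unfolding S_def using powr_integrable by (intro set_integrable_mult_right) auto
    show "set_borel_measurable lborel S h"
      unfolding set_borel_measurable_def S_def h_def Lser_def FN_def by measurable
    show "AE x in lborel. x \<in> S \<longrightarrow> norm (h x) \<le> norm (M * x powr (-1/2))"
    proof (rule AE_I2, rule impI)
      fix x assume x: "x \<in> S"
      have "h x \<le> M * x powr (-1/2)" using M x by (auto simp: S_def h_def)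
      thus "norm (h x) \<le> norm (M * x powr (-1/2))" using h0[OF x] by simp
    qed
  qed
  define f where "f = (\<lambda>x. indicator S x * (Lser a j x * Finf a x * \<bar>ln x\<bar> ^ (j - 1) / x))"
  define w where "w = (\<lambda>x. indicator S x * h x)"
  have lim: "(\<lambda>i. sN a j (i + N0) x) \<longlonglongrightarrow> f x" for x
  proof (cases "x \<in> S")
    case False thus ?thesis by (simp add: sN_def f_def S_def)
  next
    case True
    hence x0: "0 < x" and x1: "x < 1" by (auto simp: S_def)
    have "(\<lambda>N. LN a j N x) \<longlonglongrightarrow> Lser a j x"
      unfolding LN_tm Lser_tm using summ[OF x0 x1] by (rule summable_LIMSEQ)
    moreover have "(\<lambda>N. FN a N x) \<longlonglongrightarrow> Finf a x"
      by (rule FN_lim[OF pos summ[OF x0 x1] x0 x1])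
    ultimately have "(\<lambda>N. sN a j N x) \<longlonglongrightarrow> f x"
      using True unfolding sN_def f_def S_def by (auto intro!: tendsto_intros)
    thus ?thesis by (rule LIMSEQ_ignore_initial_segment)
  qed
  have fm: "f \<in> borel_measurable lborel"
    by (rule borel_measurable_LIMSEQ_real[where u="\<lambda>i. sN a j (i + N0)"]) (use lim in auto)
  have wi: "integrable lborel w"
    using int1 unfolding set_integrable_def w_def by simp
  have bound: "norm (sN a j (i + N0) x) \<le> w x" for i x
  proof (cases "x \<in> S")
    case False thus ?thesis by (simp add: sN_def w_def S_def)
  next
    case True
    hence x0: "0 < x" and x1: "x < 1" by (auto simp: S_def)
    define N where "N = i + N0"
    have L0: "0 \<le> LN a j N x" unfolding LN_tm using x0 x1 by (intro sum_nonneg tm_nonneg) auto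
    have L1: "LN a j N x \<le> Lser a j x" unfolding LN_tm Lser_tm
      using summ[OF x0 x1] x0 x1 by (intro sum_le_suminf tm_nonneg) auto
    have F0: "0 \<le> FN a N x" using x0 x1 by (intro FN_nonneg) auto
    have F1: "FN a N x \<le> FN a N0 x" using x0 x1 by (intro FN_antimono) (auto simp: N_def)
    have "LN a j N x * FN a N x \<le> Lser a j x * FN a N0 x"
      using L0 L1 F0 F1 by (intro mult_mono) auto
    hence "LN a j N x * FN a N x * \<bar>ln x\<bar> ^ (j - 1) / x \<le> h x"
      unfolding h_def using x0 by (intro divide_right_mono mult_right_mono) auto
    moreover have "0 \<le> LN a j N x * FN a N x * \<bar>ln x\<bar> ^ (j - 1) / x"
      using L0 F0 x0 by auto
    moreover have "sN a j N x = LN a j N x * FN a N x * \<bar>ln x\<bar> ^ (j - 1) / x"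
      using True by (simp add: sN_def S_def)
    moreover have "w x = h x" using True by (simp add: w_def)
    ultimately show ?thesis unfolding N_def[symmetric] real_norm_def
      by (metis abs_of_nonneg)
  qed
  have dc1: "integrable lborel f"
    by (rule integrable_dominated_convergence[where s="\<lambda>i. sN a j (i + N0)" and w=w])
       (use fm wi lim bound in auto)
  have dc2: "(\<lambda>i. LINT x|lborel. sN a j (i + N0) x) \<longlonglongrightarrow> (LINT x|lborel. f x)"
    by (rule integral_dominated_convergence[where s="\<lambda>i. sN a j (i + N0)" and w=w])
       (use fm wi lim bound in auto)
  have "(\<lambda>i. EU a j (i + N0)) \<longlonglongrightarrow> 1 / fact (j - 1) * (LINT x|lborel. f x)"
    unfolding EU_repr[OF pos j] by (intro tendsto_intros dc2)
  hence EUlim: "(\<lambda>N. EU a j N) \<longlonglongrightarrow> 1 / fact (j - 1) * (LINT x|lborel. f x)"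
    by (rule LIMSEQ_offset)
  have Ieq: "I_alpha a j = 1 / fact (j - 1) * (LINT x|lborel. f x)"
    unfolding I_alpha_def set_lebesgue_integral_def xa f_def S_def by simp
  show ?thesis
  proof (intro conjI exI)
    show "set_integrable lborel {0<..<1::real} (\<lambda>x. Lser a j x * FN a N0 x * \<bar>ln x\<bar> ^ (j - 1) / x)"
      using int1 unfolding S_def h_def .
    show "set_integrable lborel {0<..<x_alpha a} (\<lambda>x. Lser a j x * Finf a x * \<bar>ln x\<bar> ^ (j - 1) / x)"
      using dc1 unfolding set_integrable_def xa f_def S_def by simp
    show "(\<lambda>N. EU a j N) \<longlonglongrightarrow> I_alpha a j" unfolding Ieq by (rule EUlim)
  qed
qed

end
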